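(* Let $M\ge 3$, let $\pi\in\mathcal B_M$, and let $yz$ be an outer boundary edge of the triangular ladder $\mathscr L_\pi$. Then the backward extension graph $B_{\pi,yz}$ is balanced, i.e. $m_{B_{\pi,yz}}\ge m_K$ for every subextension $K$ of $B_{\pi,yz}$.
   Context: Extension graphs: a graph $H=(V_H,E_H)$ with an independent set $I_H\subseteq V_H$ of distinguished vertices; density $m_H=|E_H|/(|V_H|-|I_H|)$; a subextension $K$ of $H$ is an extension graph with $V_K\subseteq V_H$, $E_K\subseteq E_H$ and $I_K=I_H$. Words: $\Pi\subset\{\mathtt e,0,1\}^*$ is the set of words $\pi=\pi(1)\pi(2)\cdots$ that do not have the symbol $0$ at positions $1$ or $2$, have at most two occurrences of $\mathtt e$, and do not contain the substrings $\mathtt e0$, $\mathtt e10$, $\mathtt e1\mathtt e$. $\pi_\ell$ denotes the length-$\ell$ prefix and $\circ$ concatenation. Triangular ladder $\mathscr L_\pi$ ($|\pi|=k\ge1$), a graph on $\{0,1,\dots,k+1\}$: $\mathscr L_1$ has edges $02,12$; $\mathscr L_{\mathtt e}$ has the single edge $12$. For $k\ge2$, start from $\mathscr L_{\pi_{k-1}}$, add vertex $k+1$ and edge $(k,k+1)$; additionally if $\pi(k)=1$ add edge $(k-1,k+1)$, and if $\pi(k)=0$ add edge $(w,k+1)$ where $w$ is the unique neighbor of $k$ in $\mathscr L_{\pi_{k-1}}$ other than $k-1$. $f$-fan ($f\ge3$) at a vertex $a>0$: either $\pi(a-2)\ne\mathtt e$ and $\pi(a+1)=1$, $\pi(a+i)=0$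 for $2\le i\le f$; or $\pi(a-2)=\mathtt e$ and $\pi(a+1)=1$, $\pi(a+i)=0$ for $2\le i\le f-1$ (here $\pi(j)$ for $j\le 0$ is regarded as different from $\mathtt e$). $\mathcal B_M$ ($M\ge3$): the set of $\pi\in\Pi$ with no $M$-fan and satisfying one of: (a) $\pi$ has no $\mathtt e$ and $|\pi|\le 3M-1$; (b) $\pi$ has one $\mathtt e$, $|\pi|\le 2M$ and $\pi(2M)\ne\mathtt e$; (c) $\pi$ has two $\mathtt e$'s, $|\pi|\le M+1$ and $\pi(M+1)\ne\mathtt e$. Boundary edges: for $\pi\in\mathcal B_M$ and an edge $yz$ of $\mathscr L_\pi$ with $0<y<z$ and $\pi(y)\ne\mathtt e$, let $\pi'=\pi_{z-1}\circ0$ if $y<z-1$ and $\pi'=\pi_{z-1}\circ 1$ if $y=z-1$; $yz$ is a boundary edge if $\pi'\notin\mathcal B_M$. It is an outer boundary edge if moreover $z=|\pi|+1$ and $|\pi|$ equals $3M-1$, $2M$ or $M+1$ according as $\pi$ contains $0$, $1$ or $2$ copies of $\mathtt e$. Backward extension $B_{\pi,yz}$ (for an outer boundary edge $yz$): the extension graph obtained from $\mathscr L_\pi$ by deleting all edges with both endpoints in $I=\{0,1,y,z\}$, with distinguished vertex set $I$. *)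

theory Defs
  imports Complex_Main "HOL-Library.Sublist"
begin

text \<open>Letters: Le = e, L0 = 0, L1 = 1.\<close>
datatype sym = Le | L0 | L1

text \<open>1-indexed letter access; None outside positions 1..length.\<close>
definition pos :: "sym list \<Rightarrow> nat \<Rightarrow> sym option" where
  "pos \<pi> j = (if 1 \<le> j \<and> j \<le> length \<pi> then Some (\<pi> ! (j - 1)) else None)"

definition Pi_words :: "sym list set" where
  "Pi_words = {\<pi>. pos \<pi> 1 \<noteq> Some L0 \<and> pos \<pi> 2 \<noteq> Some L0 \<and> count_list \<pi> Le \<le> 2
      \<and> \<not> sublist [Le, L0] \<pi> \<and> \<not> sublist [Le, L1, L0] \<pi> \<and> \<not> sublist [Le, L1, Le] \<pi>}"

fun ladder_aux :: "sym list \<Rightarrow> nat \<Rightarrow> nat set set" where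
  "ladder_aux \<pi> 0 = {}"
| "ladder_aux \<pi> (Suc 0) = (if \<pi> ! 0 = Le then {{1, 2}} else {{0, 2}, {1, 2}})"
| "ladder_aux \<pi> (Suc (Suc j)) =
     (let k = Suc (Suc j); G = ladder_aux \<pi> (Suc j)
      in G \<union> {{k, k + 1}} \<union>
         (case \<pi> ! (k - 1) of
            L1 \<Rightarrow> {{k - 1, k + 1}}
          | L0 \<Rightarrow> {{THE w. {w, k} \<in> G \<and> w \<noteq> k - 1, k + 1}}
          | Le \<Rightarrow> {}))"

definition ladder :: "sym list \<Rightarrow> nat set set" where
  "ladder \<pi> = ladder_aux \<pi> (length \<pi>)"

definition ladder_vertices :: "sym list \<Rightarrow> nat set" where
  "ladder_vertices \<pi> = {0 .. length \<pi> + 1}"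

definition fan_at :: "sym list \<Rightarrow> nat \<Rightarrow> nat \<Rightarrow> bool" where
  "fan_at \<pi> f a \<longleftrightarrow> 0 < a \<and>
     ((pos \<pi> (a - 2) \<noteq> Some Le \<and> pos \<pi> (a + 1) = Some L1 \<and> (\<forall>i\<in>{2..f}. pos \<pi> (a + i) = Some L0))
    \<or> (pos \<pi> (a - 2) = Some Le \<and> pos \<pi> (a + 1) = Some L1 \<and> (\<forall>i\<in>{2..f - 1}. pos \<pi> (a + i) = Some L0)))"

definition B_set :: "nat \<Rightarrow> sym list set" where
  "B_set M = {\<pi>. \<pi> \<in> Pi_words \<and> \<not> (\<exists>a. fan_at \<pi> M a) \<and>
     ((count_list \<pi> Le = 0 \<and> length \<pi> \<le> 3 * M - 1)
    \<or> (count_list \<pi> Le = 1 \<and> length \<pi> \<le> 2 * M \<and> pos \<pi> (2 * M) \<noteq> Some Le)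
    \<or> (count_list \<pi> Le = 2 \<and> length \<pi> \<le> M + 1 \<and> pos \<pi> (M + 1) \<noteq> Some Le))}"

definition boundary_edge :: "nat \<Rightarrow> sym list \<Rightarrow> nat \<Rightarrow> nat \<Rightarrow> bool" where
  "boundary_edge M \<pi> y z \<longleftrightarrow> \<pi> \<in> B_set M \<and> {y, z} \<in> ladder \<pi> \<and> 0 < y \<and> y < z \<and>
     pos \<pi> y \<noteq> Some Le \<and>
     (let \<pi>' = take (z - 1) \<pi> @ [if y < z - 1 then L0 else L1] in \<pi>' \<notin> B_set M)"

definition outer_boundary_edge :: "nat \<Rightarrow> sym list \<Rightarrow> nat \<Rightarrow> nat \<Rightarrow> bool" where
  "outer_boundary_edge M \<pi> y z \<longleftrightarrow> boundary_edge M \<pi> y z \<and> z = length \<pi> + 1 \<and>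
     length \<pi> = (if count_list \<pi> Le = 0 then 3 * M - 1
                  else if count_list \<pi> Le = 1 then 2 * M else M + 1)"

definition ext_graph :: "nat set \<Rightarrow> nat set set \<Rightarrow> nat set \<Rightarrow> bool" where
  "ext_graph V Es I \<longleftrightarrow> finite V \<and>
     (\<forall>e\<in>Es. \<exists>u v. e = {u, v} \<and> u \<noteq> v \<and> u \<in> V \<and> v \<in> V) \<and>
     I \<subseteq> V \<and> (\<forall>e\<in>Es. \<not> e \<subseteq> I)"

definition density :: "nat set \<Rightarrow> nat set set \<Rightarrow> nat set \<Rightarrow> real" where
  "density V Es I = real (card Es) / (real (card V) - real (card I))"

definition subext :: "nat set \<Rightarrow> nat set set \<Rightarrow> nat set \<Rightarrow> nat set \<Rightarrow> nat set set \<Rightarrow> nat set \<Rightarrow> bool" where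
  "subext VK EK IK VH EH IH \<longleftrightarrow> ext_graph VK EK IK \<and> VK \<subseteq> VH \<and> EK \<subseteq> EH \<and> IK = IH"

definition balanced :: "nat set \<Rightarrow> nat set set \<Rightarrow> nat set \<Rightarrow> bool" where
  "balanced V Es I \<longleftrightarrow> ext_graph V Es I \<and>
     (\<forall>VK EK. subext VK EK I V Es I \<longrightarrow> density VK EK I \<le> density V Es I)"

definition bw_I :: "nat \<Rightarrow> nat \<Rightarrow> nat set" where
  "bw_I y z = {0, 1, y, z}"

definition bw_E :: "sym list \<Rightarrow> nat \<Rightarrow> nat \<Rightarrow> nat set set" where
  "bw_E \<pi> y z = {e \<in> ladder \<pi>. \<not> e \<subseteq> bw_I y z}"

end

theory Submission
  imports Defs
begin


fun bb :: "sym list \<Rightarrow> nat \<Rightarrow> nat" where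
  "bb p 0 = 0"
| "bb p (Suc 0) = 0"
| "bb p (Suc (Suc j)) = (if p ! Suc j = L0 then bb p (Suc j) else Suc j)"

definition Bk :: "sym list \<Rightarrow> nat \<Rightarrow> nat set" where
  "Bk p k = (if p ! (k - 1) = Le then {k} else {k, bb p k})"

lemma bb_less: "1 \<le> k \<Longrightarrow> bb p k < k"
  by (induction p k rule: bb.induct) auto

lemma Bk_le: "1 \<le> k \<Longrightarrow> u \<in> Bk p k \<Longrightarrow> u \<le> k"
  using bb_less[of k p] by (auto simp: Bk_def split: if_splits)

lemma ladder_char:
  assumes "\<And>i. 1 \<le> i \<Longrightarrow> i < length p \<Longrightarrow> \<not> (p ! (i - 1) = Le \<and> p ! i = L0)"
  shows "1 \<le> j \<Longrightarrow> j \<le> length p \<Longrightarrow> ladder_aux p j = (\<Union>k\<in>{1..j}. (\<lambda>u. {u, Suc k}) ` Bk p k)"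
proof (induction j rule: nat_less_induct)
  case (1 j)
  show ?case
  proof (cases j)
    case 0 then show ?thesis using 1 by simp
  next
    case (Suc j1)
    show ?thesis
    proof (cases j1)
      case 0 then show ?thesis using Suc by (auto simp: Bk_def)
    next
      case (Suc j2)
      define k where "k = Suc (Suc j2)"
      have jk: "j = k" using \<open>j = Suc j1\<close> Suc k_def by simp
      define G where "G = ladder_aux p (Suc j2)"
      have IH: "G = (\<Union>k\<in>{1..Suc j2}. (\<lambda>u. {u, Suc k}) ` Bk p k)"
        unfolding G_def using 1 jk k_def by auto
      have nb: "{w, k} \<in> G \<longleftrightarrow> w \<in> Bk p (k - 1)" for w
      proof
        assume "{w, k} \<in> G"
        then obtain k' u where k': "k' \<in> {1..Suc j2}" "u \<in> Bk p k'" "{w,k} = {u, Suc k'}"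
          using IH by auto
        have "u \<le> k'" using Bk_le k' by auto
        have "k' \<le> Suc j2" using k' by auto
        have "(w = u \<and> k = Suc k') \<or> (w = Suc k' \<and> k = u)" using k'(3) by (simp add: doubleton_eq_iff)
        moreover have "k \<noteq> u" using \<open>u \<le> k'\<close> \<open>k' \<le> Suc j2\<close> k_def by simp
        ultimately have "w = u" "k' = k - 1" by auto
        then show "w \<in> Bk p (k - 1)" using k' by simp
      next
        assume "w \<in> Bk p (k - 1)"
        moreover have "k - 1 \<in> {1..Suc j2}" "Suc (k - 1) = k" using k_def by auto
        ultimately have "{w, k} \<in> (\<lambda>u. {u, Suc (k - 1)}) ` Bk p (k - 1)" by simp
        then show "{w, k} \<in> G" unfolding IH using \<open>k - 1 \<in> {1..Suc j2}\<close> by blast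
      qed
      define C where "C = (case p ! (k - 1) of
            L1 \<Rightarrow> {{k - 1, k + 1}}
          | L0 \<Rightarrow> {{THE w. {w, k} \<in> G \<and> w \<noteq> k - 1, k + 1}}
          | Le \<Rightarrow> {})"
      have step: "ladder_aux p k = G \<union> {{k, k + 1}} \<union> C"
        unfolding G_def C_def k_def by (simp add: Let_def)
      have last: "C \<union> {{k, k+1}} = (\<lambda>u. {u, Suc k}) ` Bk p k"
      proof (cases "p ! (k - 1)")
        case Le then show ?thesis by (simp add: C_def Bk_def)
      next
        case L1 then show ?thesis by (simp add: C_def Bk_def k_def)
      next
        case L0
        have ne: "p ! (k - 2) \<noteq> Le"
          using assms[of "k - 1"] L0 1(3) jk k_def by auto
        have bl: "bb p (k - 1) < k - 1" using bb_less[of "k - 1" p] k_def by simp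
        have "(THE w. {w, k} \<in> G \<and> w \<noteq> k - 1) = bb p (k - 1)"
        proof (rule the_equality)
          show "{bb p (k - 1), k} \<in> G \<and> bb p (k - 1) \<noteq> k - 1"
            using nb ne bl k_def by (simp add: Bk_def)
        next
          fix w assume "{w, k} \<in> G \<and> w \<noteq> k - 1"
          then show "w = bb p (k - 1)" using nb ne k_def by (auto simp: Bk_def)
        qed
        moreover have "bb p k = bb p (k - 1)" using L0 k_def by simp
        ultimately show ?thesis using L0 by (auto simp: C_def Bk_def)
      qed
      have U: "(\<Union>i\<in>{1..k}. (\<lambda>u. {u, Suc i}) ` Bk p i) =
            (\<Union>i\<in>{1..Suc j2}. (\<lambda>u. {u, Suc i}) ` Bk p i) \<union> (\<lambda>u. {u, Suc k}) ` Bk p k"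
        unfolding k_def by (simp add: atLeastAtMostSuc_conv Un_commute)
      have L1: "ladder_aux p k = G \<union> (C \<union> {{k, k+1}})" using step by blast
      have L2: "ladder_aux p k = G \<union> (\<lambda>u. {u, Suc k}) ` Bk p k" using L1 last by (metis Un_insert_left Un_insert_right sup_left_commute)
      show ?thesis unfolding jk U L2 IH ..
    qed
  qed
qed

lemma sublist2: "Suc i < length p \<Longrightarrow> sublist [p ! i, p ! Suc i] p"
proof -
  assume a: "Suc i < length p"
  have "drop i p = p ! i # p ! Suc i # drop (Suc (Suc i)) p"
    using a by (metis Cons_nth_drop_Suc Suc_lessD)
  then have "p = take i p @ [p ! i, p ! Suc i] @ drop (Suc (Suc i)) p"
    by (metis append_Cons append_Nil append_take_drop_id)
  then show ?thesis unfolding sublist_def by blast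
qed

lemma sublist3: "Suc (Suc i) < length p \<Longrightarrow> sublist [p ! i, p ! Suc i, p ! Suc (Suc i)] p"
proof -
  assume a: "Suc (Suc i) < length p"
  have "drop i p = p ! i # p ! Suc i # p ! Suc (Suc i) # drop (Suc (Suc (Suc i))) p"
    using a by (metis Cons_nth_drop_Suc Suc_lessD)
  then have "p = take i p @ [p ! i, p ! Suc i, p ! Suc (Suc i)] @ drop (Suc (Suc (Suc i))) p"
    by (metis append_Cons append_Nil append_take_drop_id)
  then show ?thesis unfolding sublist_def by blast
qed

text \<open>1-indexed letters: position k is p ! (k - 1).\<close>

lemma Pi_e0: "p \<in> Pi_words \<Longrightarrow> 1 \<le> i \<Longrightarrow> i < length p \<Longrightarrow> p ! (i - 1) = Le \<Longrightarrow> p ! i \<noteq> L0"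
  using sublist2[of "i - 1" p] unfolding Pi_words_def by auto

lemma Pi_e10: "p \<in> Pi_words \<Longrightarrow> 1 \<le> i \<Longrightarrow> Suc i < length p \<Longrightarrow> p ! (i - 1) = Le \<Longrightarrow> p ! i = L1
   \<Longrightarrow> p ! Suc i \<noteq> L0"
  using sublist3[of "i - 1" p] unfolding Pi_words_def by auto

lemma Pi_e1e: "p \<in> Pi_words \<Longrightarrow> 1 \<le> i \<Longrightarrow> Suc i < length p \<Longrightarrow> p ! (i - 1) = Le \<Longrightarrow> p ! i = L1
   \<Longrightarrow> p ! Suc i \<noteq> Le"
  using sublist3[of "i - 1" p] unfolding Pi_words_def by auto

lemma Pi_1: "p \<in> Pi_words \<Longrightarrow> 1 \<le> length p \<Longrightarrow> p ! 0 \<noteq> L0"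
  unfolding Pi_words_def pos_def by auto

lemma Pi_2: "p \<in> Pi_words \<Longrightarrow> 2 \<le> length p \<Longrightarrow> p ! 1 \<noteq> L0"
  unfolding Pi_words_def pos_def by auto

lemma bb_struct:
  assumes P: "p \<in> Pi_words"
  shows "2 \<le> k \<Longrightarrow> k \<le> length p \<Longrightarrow> p ! (k - 1) \<noteq> Le \<Longrightarrow>
    1 \<le> bb p k \<and> bb p k < k \<and> p ! (bb p k) = L1 \<and> (\<forall>i. bb p k + 2 \<le> i \<and> i \<le> k \<longrightarrow> p ! (i - 1) = L0)"
proof (induction k rule: nat_less_induct)
  case (1 k)
  show ?case
  proof (cases "k = 2")
    case True
    have "p ! 1 \<noteq> L0" using Pi_2[OF P] 1(3) True by simp
    then have "p ! 1 = L1" using 1(4) True by (cases "p ! 1") auto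
    moreover have "bb p 2 = 1" using \<open>p ! 1 \<noteq> L0\<close> by (simp add: numeral_2_eq_2)
    ultimately show ?thesis using True by auto
  next
    case False
    then obtain j where kj: "k = Suc (Suc j)" "1 \<le> j" using 1(2)
      by (metis One_nat_def Suc_le_D add_2_eq_Suc le_add1 le_antisym nat.inject not_less_eq_eq numeral_2_eq_2)
    show ?thesis
    proof (cases "p ! Suc j = L0")
      case True
      have ne: "p ! j \<noteq> Le" using Pi_e0[OF P, of "Suc j"] True 1(3) kj by auto
      have IH: "1 \<le> bb p (Suc j) \<and> bb p (Suc j) < Suc j \<and> p ! (bb p (Suc j)) = L1 \<and>
          (\<forall>i. bb p (Suc j) + 2 \<le> i \<and> i \<le> Suc j \<longrightarrow> p ! (i - 1) = L0)"
        using 1(1)[rule_format, of "Suc j"] kj 1(3) ne by auto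
      have "bb p k = bb p (Suc j)" using True kj by simp
      moreover have "\<forall>i. bb p (Suc j) + 2 \<le> i \<and> i \<le> k \<longrightarrow> p ! (i - 1) = L0"
      proof (intro allI impI)
        fix i assume "bb p (Suc j) + 2 \<le> i \<and> i \<le> k"
        then show "p ! (i - 1) = L0" using IH True kj by (cases "i = k") auto
      qed
      ultimately show ?thesis using IH kj by auto
    next
      case False
      then show ?thesis using kj 1(4) by (cases "p ! Suc j") auto
    qed
  qed
qed

lemma bb_ge1: "p \<in> Pi_words \<Longrightarrow> 2 \<le> k \<Longrightarrow> k \<le> length p \<Longrightarrow> p ! (k - 1) \<noteq> Le \<Longrightarrow> 1 \<le> bb p k"
  using bb_struct by blast

definition nofan :: "nat \<Rightarrow> sym list \<Rightarrow> bool" where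
  "nofan M p \<longleftrightarrow> \<not> (\<exists>a. fan_at p M a)"

lemma fan_bound:
  assumes P: "p \<in> Pi_words" and NF: "nofan M p" and M: "M \<ge> 3"
    and k: "2 \<le> k" "k \<le> length p" "p ! (k - 1) \<noteq> Le"
  shows "k - bb p k \<le> M - 1"
proof (rule ccontr)
  assume "\<not> k - bb p k \<le> M - 1"
  then have big: "bb p k + M \<le> k" by simp
  define a where "a = bb p k"
  have S: "1 \<le> a" "a < k" "p ! a = L1" "\<forall>i. a + 2 \<le> i \<and> i \<le> k \<longrightarrow> p ! (i - 1) = L0"
    using bb_struct[OF P k] a_def by auto
  have p1: "pos p (a + 1) = Some L1" using S k unfolding pos_def by auto
  have p0: "pos p (a + i) = Some L0" if "i \<in> {2..M}" for i
    using S(4)[rule_format, of "a + i"] that big k a_def unfolding pos_def by auto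
  have "fan_at p M a"
  proof (cases "pos p (a - 2) = Some Le")
    case True then show ?thesis unfolding fan_at_def using S p1 p0 by auto
  next
    case False then show ?thesis unfolding fan_at_def using S p1 p0 by auto
  qed
  then show False using NF unfolding nofan_def by blast
qed

lemma fan_boundE:
  assumes P: "p \<in> Pi_words" and NF: "nofan M p" and M: "M \<ge> 3"
    and k: "2 \<le> k" "k \<le> length p" "p ! (k - 1) \<noteq> Le"
    and E: "pos p (bb p k - 2) = Some Le"
  shows "k - bb p k \<le> M - 2"
proof (rule ccontr)
  assume "\<not> k - bb p k \<le> M - 2"
  then have big: "bb p k + M - 1 \<le> k" using M by simp
  define a where "a = bb p k"
  have S: "1 \<le> a" "a < k" "p ! a = L1" "\<forall>i. a + 2 \<le> i \<and> i \<le> k \<longrightarrow> p ! (i - 1) = L0"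
    using bb_struct[OF P k] a_def by auto
  have p1: "pos p (a + 1) = Some L1" using S k unfolding pos_def by auto
  have p0: "pos p (a + i) = Some L0" if "i \<in> {2..M - 1}" for i
    using S(4)[rule_format, of "a + i"] that big k a_def unfolding pos_def by auto
  have "fan_at p M a" unfolding fan_at_def using S p1 p0 E a_def by auto
  then show False using NF unfolding nofan_def by blast
qed

lemma ladder_eq: "p \<in> Pi_words \<Longrightarrow> 1 \<le> length p \<Longrightarrow>
    ladder p = (\<Union>k\<in>{1..length p}. (\<lambda>u. {u, Suc k}) ` Bk p k)"
  unfolding ladder_def by (rule ladder_char) (auto dest: Pi_e0)

definition lam :: "sym list \<Rightarrow> nat set \<Rightarrow> nat \<Rightarrow> nat" where
  "lam p X k = (if k \<in> X then 0 else 1) + (if p ! (k - 1) \<noteq> Le \<and> bb p k \<in> X then 0 else 1)"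

definition KX :: "sym list \<Rightarrow> nat set \<Rightarrow> nat set" where
  "KX p X = {k \<in> {1..length p}. Suc k \<in> X}"

definition Ein :: "sym list \<Rightarrow> nat set \<Rightarrow> nat set set" where
  "Ein p X = {e \<in> ladder p. e \<subseteq> X}"

lemma card_Bk: "1 \<le> k \<Longrightarrow> card (Bk p k \<inter> X) + lam p X k = 2"
  using bb_less[of k p] unfolding Bk_def lam_def by (auto simp: Int_insert_left)

lemma count_edges:
  assumes P: "p \<in> Pi_words" and n: "1 \<le> length p"
  shows "card (Ein p X) + sum (lam p X) (KX p X) = 2 * card (KX p X)"
proof -
  define g where "g = (\<lambda>(k::nat, u::nat). {u, Suc k})"
  define S where "S = (SIGMA k:KX p X. Bk p k \<inter> X)"
  have fK: "finite (KX p X)" unfolding KX_def by auto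
  have fB: "finite (Bk p k)" for k unfolding Bk_def by auto
  have E: "Ein p X = g ` S"
  proof
    show "Ein p X \<subseteq> g ` S"
    proof
      fix e assume "e \<in> Ein p X"
      then obtain k u where ku: "k \<in> {1..length p}" "u \<in> Bk p k" "e = {u, Suc k}" "e \<subseteq> X"
        unfolding Ein_def ladder_eq[OF P n] by auto
      then have "(k, u) \<in> S" unfolding S_def KX_def by auto
      then show "e \<in> g ` S" using ku unfolding g_def by force
    qed
  next
    show "g ` S \<subseteq> Ein p X"
    proof
      fix e assume "e \<in> g ` S"
      then obtain k u where ku: "k \<in> KX p X" "u \<in> Bk p k" "u \<in> X" "e = {u, Suc k}"
        unfolding S_def g_def by auto
      then have "e \<in> ladder p" unfolding ladder_eq[OF P n] KX_def by auto
      moreover have "e \<subseteq> X" using ku unfolding KX_def by auto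
      ultimately show "e \<in> Ein p X" unfolding Ein_def by auto
    qed
  qed
  have inj: "inj_on g S"
  proof (rule inj_onI)
    fix x y assume "x \<in> S" "y \<in> S" "g x = g y"
    then obtain k u k' u' where xy: "x = (k, u)" "y = (k', u')" "k \<in> KX p X" "k' \<in> KX p X"
      "u \<in> Bk p k" "u' \<in> Bk p k'" "{u, Suc k} = {u', Suc k'}"
      unfolding S_def g_def by auto
    have "u \<le> k" "u' \<le> k'" using xy Bk_le unfolding KX_def by auto
    then show "x = y" using xy(1,2,7) by (auto simp: doubleton_eq_iff)
  qed
  have "card (Ein p X) = card S" using E inj card_image by auto
  also have "\<dots> = (\<Sum>k\<in>KX p X. card (Bk p k \<inter> X))"
    unfolding S_def using fK fB by (simp add: card_SigmaI)
  finally have "card (Ein p X) + sum (lam p X) (KX p X) = (\<Sum>k\<in>KX p X. card (Bk p k \<inter> X) + lam p X k)"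
    by (simp add: sum.distrib)
  also have "\<dots> = (\<Sum>k\<in>KX p X. 2)"
    by (rule sum.cong) (auto simp: KX_def card_Bk)
  finally show ?thesis by simp
qed



lemma sum_ind: "finite A \<Longrightarrow> (\<Sum>k\<in>A. if Q k then 0 else (1::nat)) = card {k \<in> A. \<not> Q k}"
proof (induction A rule: finite_induct)
  case empty then show ?case by simp
next
  case (insert x F)
  have "{k \<in> insert x F. \<not> Q k} = (if Q x then {k \<in> F. \<not> Q k} else insert x {k \<in> F. \<not> Q k})" by auto
  then show ?case using insert by auto
qed

lemma two_le_sum: "finite A \<Longrightarrow> a \<in> A \<Longrightarrow> b \<in> A \<Longrightarrow> a \<noteq> b \<Longrightarrow> f a + f b \<le> (sum f A :: nat)"
proof -
  assume a: "finite A" "a \<in> A" "b \<in> A" "a \<noteq> b"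
  have "sum f A = f a + sum f (A - {a})" using a by (simp add: sum.remove)
  moreover have "f b \<le> sum f (A - {a})" using a by (intro member_le_sum) auto
  ultimately show ?thesis by simp
qed

lemma bb_Suc: "1 \<le> k \<Longrightarrow> bb p (Suc k) = (if p ! k = L0 then bb p k else k)"
  by (cases k) auto

context
  fixes p :: "sym list" and M :: nat and X :: "nat set" and y :: nat
  assumes P: "p \<in> Pi_words" and NF: "nofan M p" and M3: "M \<ge> 3"
    and n2: "2 \<le> length p"
    and Xs: "X \<subseteq> {0..Suc (length p)}" and X0: "0 \<in> X" and X1: "1 \<in> X"
    and Xz: "Suc (length p) \<in> X"
    and Xy: "y \<in> X" and yB: "y \<in> Bk p (length p)" and y0: "0 < y" and yE: "p ! (y - 1) \<noteq> Le"
begin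

definition "GE = {k \<in> KX p X. k \<notin> X}"
definition "HH = {k \<in> KX p X. \<not> (p ! (k - 1) \<noteq> Le \<and> bb p k \<in> X)}"
definition "DD = {d \<in> {2..length p}. d \<notin> X}"

lemma fKX: "finite (KX p X)" unfolding KX_def by auto
lemma fGE: "finite GE" unfolding GE_def using fKX by auto
lemma fHH: "finite HH" unfolding HH_def using fKX by auto

lemma ell_split: "sum (lam p X) (KX p X) = card GE + card HH"
proof -
  have "sum (lam p X) (KX p X) = (\<Sum>k\<in>KX p X. if k \<in> X then 0 else 1) +
      (\<Sum>k\<in>KX p X. if p ! (k - 1) \<noteq> Le \<and> bb p k \<in> X then 0 else 1)"
    unfolding lam_def by (simp add: sum.distrib)
  then show ?thesis unfolding GE_def HH_def using sum_ind[OF fKX] by simp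
qed

lemma lam_le2: "lam p X k \<le> 2" unfolding lam_def by auto

lemma lam_le1:
  assumes L: "sum (lam p X) (KX p X) \<le> 2" and k: "k \<in> KX p X"
  shows "lam p X k \<le> 1"
proof (rule ccontr)
  assume "\<not> lam p X k \<le> 1"
  then have l2: "lam p X k = 2" using lam_le2[of k] by simp
  have kX: "k \<notin> X"
  proof
    assume "k \<in> X" then have "lam p X k \<le> 1" unfolding lam_def by simp
    then show False using l2 by simp
  qed
  have kb: "\<not> (p ! (k - 1) \<noteq> Le \<and> bb p k \<in> X)"
  proof
    assume "p ! (k - 1) \<noteq> Le \<and> bb p k \<in> X" then have "lam p X k \<le> 1" unfolding lam_def by simp
    then show False using l2 by simp
  qed
  have k1: "1 \<le> k" "k \<le> length p" "Suc k \<in> X" using k unfolding KX_def by auto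
  show False
  proof (cases "k = length p")
    case True
    show False
    proof (cases "p ! (length p - 1) = Le")
      case True2: True
      then have "y = length p" using yB by (simp add: Bk_def)
      then show False using yE True2 by simp
    next
      case False2: False
      then have "y = length p \<or> y = bb p (length p)" using yB by (simp add: Bk_def)
      then show False using Xy kX kb True False2 by blast
    qed
  next
    case False
    then have kn: "k < length p" using k1 by simp
    define k' where "k' = (LEAST j. k < j \<and> Suc j \<in> X)"
    have ex: "k < length p \<and> Suc (length p) \<in> X" using kn Xz by simp
    have k'1: "k < k'" "Suc k' \<in> X" using LeastI[of "\<lambda>j. k < j \<and> Suc j \<in> X", OF ex] k'_def by auto
    have k'2: "k' \<le> length p" using Least_le[of "\<lambda>j. k < j \<and> Suc j \<in> X", OF ex] k'_def by auto
    have k'K: "k' \<in> KX p X" using k'1 k'2 k1 unfolding KX_def by auto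
    have "lam p X k' \<ge> 1"
    proof (cases "k' = Suc k")
      case True
      have bs: "bb p (Suc k) = (if p ! k = L0 then bb p k else k)" using bb_Suc[OF k1(1)] .
      have "\<not> (bb p k' \<in> X)"
      proof (cases "p ! k = L0")
        case True3: True
        have "p ! (k - 1) \<noteq> Le" using Pi_e0[OF P k1(1) kn] True3 by auto
        then have "bb p k \<notin> X" using kb by simp
        moreover have "bb p k' = bb p k" using True bs True3 by simp
        ultimately show ?thesis by simp
      next
        case False3: False
        have "bb p k' = k" using True bs False3 by simp
        then show ?thesis using kX by simp
      qed
      then show ?thesis unfolding lam_def by simp
    next
      case False
      then have "k < k' - 1" using k'1 by simp
      then have "\<not> (k < k' - 1 \<and> Suc (k' - 1) \<in> X)"
        using not_less_Least[of "k' - 1" "\<lambda>j. k < j \<and> Suc j \<in> X"] k'_def k'1 by auto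
      then have "k' \<notin> X" using \<open>k < k' - 1\<close> by simp
      then show ?thesis unfolding lam_def by simp
    qed
    moreover have "k \<noteq> k'" using k'1 by simp
    then have "lam p X k + lam p X k' \<le> sum (lam p X) (KX p X)"
      using two_le_sum[OF fKX k k'K] by simp
    ultimately show False using L l2 by simp
  qed
qed

lemma GE_props:
  assumes L: "sum (lam p X) (KX p X) \<le> 2" and k: "k \<in> GE"
  shows "2 \<le> k" "k \<le> length p" "p ! (k - 1) \<noteq> Le" "bb p k \<in> X" "Suc k \<in> X" "k \<notin> X"
    "bb p k < k" "k - bb p k \<le> M - 1"
proof -
  have kK: "k \<in> KX p X" "k \<notin> X" using k unfolding GE_def by auto
  then show "k \<notin> X" by simp
  show k2: "2 \<le> k" using kK X1 unfolding KX_def by (cases "k = 1") auto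
  show kn: "k \<le> length p" "Suc k \<in> X" using kK unfolding KX_def by auto
  have "lam p X k \<le> 1" using lam_le1[OF L kK(1)] .
  then show ne: "p ! (k - 1) \<noteq> Le" and "bb p k \<in> X" using kK(2) unfolding lam_def by (auto split: if_splits)
  show "bb p k < k" using bb_less[of k p] k2 by simp
  show "k - bb p k \<le> M - 1" using fan_bound[OF P NF M3 k2 kn(1) ne] .
qed

lemma G1:
  assumes L: "sum (lam p X) (KX p X) \<le> 2" and d: "d \<in> DD"
  shows "\<exists>k\<in>GE. bb p k < d \<and> d \<le> k"
proof -
  have d1: "2 \<le> d" "d \<le> length p" "d \<notin> X" using d unfolding DD_def by auto
  define k where "k = (LEAST j. d \<le> j \<and> Suc j \<in> X)"
  have ex: "d \<le> length p \<and> Suc (length p) \<in> X" using d1 Xz by simp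
  have k1: "d \<le> k" "Suc k \<in> X" using LeastI[of "\<lambda>j. d \<le> j \<and> Suc j \<in> X", OF ex] k_def by auto
  have k2: "k \<le> length p" using Least_le[of "\<lambda>j. d \<le> j \<and> Suc j \<in> X", OF ex] k_def by auto
  have gap: "i \<notin> X" if "d \<le> i" "i \<le> k" for i
  proof (cases "i = d")
    case True then show ?thesis using d1 by simp
  next
    case False
    then have "i - 1 < k" "d \<le> i - 1" using that by auto
    then have "\<not> (d \<le> i - 1 \<and> Suc (i - 1) \<in> X)"
      using not_less_Least[of "i - 1" "\<lambda>j. d \<le> j \<and> Suc j \<in> X"] k_def by auto
    then show ?thesis using \<open>d \<le> i - 1\<close> False that by auto
  qed
  have kGE: "k \<in> GE" unfolding GE_def KX_def using k1 k2 d1 gap[of k] by auto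
  have "bb p k \<in> X" "bb p k < k" using GE_props[OF L kGE] by auto
  then have "bb p k < d" using gap[of "bb p k"] by (meson less_imp_le_nat not_le)
  then show ?thesis using kGE k1 by auto
qed

lemma D_bound:
  assumes L: "sum (lam p X) (KX p X) \<le> 2"
  shows "card DD \<le> (\<Sum>k\<in>GE. k - bb p k)"
proof -
  have "DD \<subseteq> (\<Union>k\<in>GE. {Suc (bb p k)..k})"
  proof
    fix d assume "d \<in> DD"
    then obtain k where "k \<in> GE" "bb p k < d" "d \<le> k" using G1[OF L] by blast
    then have "d \<in> {Suc (bb p k)..k}" by simp
    then show "d \<in> (\<Union>k\<in>GE. {Suc (bb p k)..k})" using \<open>k \<in> GE\<close> by blast
  qed
  then have "card DD \<le> card (\<Union>k\<in>GE. {Suc (bb p k)..k})"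
    by (intro card_mono) (auto simp: fGE)
  also have "\<dots> \<le> (\<Sum>k\<in>GE. card {Suc (bb p k)..k})" using card_UN_le[OF fGE] by blast
  also have "\<dots> = (\<Sum>k\<in>GE. k - bb p k)" by simp
  finally show ?thesis .
qed

lemma D_bound2:
  assumes L: "sum (lam p X) (KX p X) \<le> 2"
  shows "card DD \<le> (M - 1) * card GE"
proof -
  have "(\<Sum>k\<in>GE. k - bb p k) \<le> card GE * (M - 1)"
    using sum_bounded_above[of GE "\<lambda>k. k - bb p k" "M - 1"] GE_props(8)[OF L] by simp
  then show ?thesis using D_bound[OF L] by (simp add: mult.commute)
qed

lemma EF:
  assumes L: "sum (lam p X) (KX p X) \<le> 2"
    and a: "1 \<le> a" "a \<le> length p" "p ! (a - 1) = Le" "Suc a \<notin> X"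
  shows "Suc a \<in> GE" "bb p (Suc a) = a" "a \<in> X" "Suc (Suc a) \<le> length p" "p ! a = L1"
    "p ! Suc a = L1" "bb p (Suc (Suc a)) = Suc a"
proof -
  have sa: "Suc a \<le> length p" using a Xz by (cases "a = length p") auto
  have dD: "Suc a \<in> DD" unfolding DD_def using a sa by auto
  obtain k where k: "k \<in> GE" "bb p k < Suc a" "Suc a \<le> k" using G1[OF L dD] by blast
  note kp = GE_props[OF L k(1)]
  have st: "1 \<le> bb p k" "p ! (bb p k) = L1" "\<forall>i. bb p k + 2 \<le> i \<and> i \<le> k \<longrightarrow> p ! (i - 1) = L0"
    using bb_struct[OF P kp(1) kp(2) kp(3)] by auto
  have ba: "bb p k = a"
  proof (rule ccontr)
    assume "bb p k \<noteq> a"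
    then have "bb p k < a" using k(2) by simp
    show False
    proof (cases "a = Suc (bb p k)")
      case True then show False using st(2) a(3) by simp
    next
      case False
      then have "p ! (a - 1) = L0" using st(3) \<open>bb p k < a\<close> k(3) by simp
      then show False using a(3) by simp
    qed
  qed
  have pa: "p ! a = L1" using st(2) ba by simp
  have ka: "k = Suc a"
  proof (rule ccontr)
    assume "k \<noteq> Suc a"
    then have "Suc (Suc a) \<le> k" using k(3) by simp
    then have "p ! (Suc (Suc a) - 1) = L0" using st(3) ba by (metis add_2_eq_Suc' le_refl)
    then have "p ! Suc a = L0" by simp
    moreover have "p ! Suc a \<noteq> L0"
      using Pi_e10[OF P a(1)] \<open>Suc (Suc a) \<le> k\<close> kp(2) a(3) pa by simp
    ultimately show False by simp
  qed
  show "Suc a \<in> GE" using k(1) ka by simp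
  show "bb p (Suc a) = a" using ba ka by simp
  show "a \<in> X" using kp(4) ba by simp
  show "p ! a = L1" using pa .
  show ssa: "Suc (Suc a) \<le> length p"
  proof (rule ccontr)
    assume "\<not> Suc (Suc a) \<le> length p"
    then have na: "length p = Suc a" using sa by simp
    then have "y = Suc a \<or> y = bb p (Suc a)" using yB pa by (simp add: Bk_def)
    then have "y = a" using Xy a(4) ba ka by auto
    then show False using yE a(3) by simp
  qed
  have "p ! Suc a \<noteq> L0" using Pi_e10[OF P a(1)] ssa a(3) pa by simp
  moreover have "p ! Suc a \<noteq> Le" using Pi_e1e[OF P a(1)] ssa a(3) pa by simp
  ultimately show "p ! Suc a = L1" by (cases "p ! Suc a") auto
  then show "bb p (Suc (Suc a)) = Suc a" by simp
qed

lemma main_comb: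
  assumes L: "sum (lam p X) (KX p X) \<le> 2"
  shows "card DD + (M - 1) * card {k \<in> {1..length p}. p ! (k - 1) = Le} \<le> (M - 1) * sum (lam p X) (KX p X)"
proof -
  define CX where "CX = {k \<in> {1..length p}. p ! (k - 1) = Le \<and> Suc k \<in> X}"
  define CD where "CD = {k \<in> {1..length p}. p ! (k - 1) = Le \<and> Suc k \<notin> X}"
  have fCX: "finite CX" and fCD: "finite CD" unfolding CX_def CD_def by auto
  have "{k \<in> {1..length p}. p ! (k - 1) = Le} = CX \<union> CD" unfolding CX_def CD_def by auto
  moreover have "CX \<inter> CD = {}" unfolding CX_def CD_def by auto
  ultimately have cc: "card {k \<in> {1..length p}. p ! (k - 1) = Le} = card CX + card CD"
    using fCX fCD by (simp add: card_Un_disjoint)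
  have CXH: "CX \<subseteq> HH" unfolding CX_def HH_def KX_def by auto
  have ls: "sum (lam p X) (KX p X) = card GE + card HH" using ell_split .
  have M1: "M - 1 \<ge> 2" using M3 by simp
  have CDa: "a \<in> CD \<Longrightarrow> 1 \<le> a \<and> a \<le> length p \<and> p ! (a - 1) = Le \<and> Suc a \<notin> X" for a
    unfolding CD_def by auto
  show ?thesis
  proof (cases "CD = {}")
    case True
    have "card CX \<le> card HH" using CXH fHH by (simp add: card_mono)
    then have t: "(M - 1) * card CX \<le> (M - 1) * card HH" by (rule mult_le_mono2)
    have d: "card DD \<le> (M - 1) * card GE" using D_bound2[OF L] .
    have "card DD + (M - 1) * card {k \<in> {1..length p}. p ! (k - 1) = Le} = card DD + (M - 1) * card CX"
      using cc True by simp
    also have "\<dots> \<le> (M - 1) * card GE + (M - 1) * card HH" using t d by linarith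
    also have "\<dots> = (M - 1) * sum (lam p X) (KX p X)" using ls by (simp add: add_mult_distrib2)
    finally show ?thesis .
  next
    case False
    then obtain a where aCD: "a \<in> CD" by blast
    note aa = CDa[OF aCD]
    note ef = EF[OF L, of a] aa
    have CDsub: "CD \<subseteq> {a}" if GEs: "GE \<subseteq> {Suc a} \<union> {k. p ! (bb p k - 1) \<noteq> Le}" for dummy :: bool
    proof
      fix a' assume "a' \<in> CD"
      note ef' = EF[OF L, of a'] CDa[OF \<open>a' \<in> CD\<close>]
      have "Suc a' \<in> GE" using ef' by simp
      then have "Suc a' = Suc a \<or> p ! (bb p (Suc a') - 1) \<noteq> Le" using GEs by auto
      then show "a' \<in> {a}" using ef' by auto
    qed
    show ?thesis
    proof (cases "Suc (Suc (Suc a)) \<in> X")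
      case True
      have a2K: "Suc (Suc a) \<in> KX p X" unfolding KX_def using ef True by auto
      have a2H: "Suc (Suc a) \<in> HH" unfolding HH_def using a2K ef by auto
      have a1G: "Suc a \<in> GE" using ef by simp
      have "card GE \<ge> 1" using a1G fGE by (metis One_nat_def Suc_leI card_gt_0_iff empty_iff)
      moreover have "card HH \<ge> 1" using a2H fHH by (metis One_nat_def Suc_leI card_gt_0_iff empty_iff)
      ultimately have c1: "card GE = 1" "card HH = 1" using L ls by auto
      have GEe: "GE = {Suc a}" using c1(1) a1G by (metis card_1_singletonE singletonD)
      have HHe: "HH = {Suc (Suc a)}" using c1(2) a2H by (metis card_1_singletonE singletonD)
      have "CX = {}"
      proof -
        have "Suc (Suc a) \<notin> CX" unfolding CX_def using ef by auto
        then show ?thesis using CXH HHe by auto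
      qed
      have "CD \<subseteq> {a}" using CDsub GEe by auto
      then have "card CD \<le> 1" using card_mono[of "{a}" CD] by simp
      then have t1: "(M - 1) * card CD \<le> M - 1" using mult_le_mono2[of "card CD" 1 "M - 1"] by simp
      have "card DD \<le> (\<Sum>k\<in>GE. k - bb p k)" using D_bound[OF L] .
      also have "\<dots> = 1" using GEe ef by simp
      finally have d1: "card DD \<le> 1" .
      have e1: "card {k \<in> {1..length p}. p ! (k - 1) = Le} = card CD" using cc \<open>CX = {}\<close> by simp
      have "card DD + (M - 1) * card {k \<in> {1..length p}. p ! (k - 1) = Le} \<le> 1 + (M - 1)"
        unfolding e1 using t1 d1 by linarith
      also have "\<dots> \<le> (M - 1) * 2" using M3 by simp
      also have "\<dots> = (M - 1) * sum (lam p X) (KX p X)" using ls c1 by simp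
      finally show ?thesis .
    next
      case False
      have a3: "Suc (Suc (Suc a)) \<le> length p" using ef False Xz
        by (metis Suc_le_eq le_neq_implies_less)
      have dD: "Suc (Suc (Suc a)) \<in> DD" unfolding DD_def using a3 False by auto
      obtain k2 where k2: "k2 \<in> GE" "bb p k2 < Suc (Suc (Suc a))" "Suc (Suc (Suc a)) \<le> k2"
        using G1[OF L dD] by blast
      note kp = GE_props[OF L k2(1)]
      have a1G: "Suc a \<in> GE" using ef by simp
      have ne: "Suc a \<noteq> k2" using k2 by simp
      have sub: "{Suc a, k2} \<subseteq> GE" using a1G k2 by simp
      then have "card {Suc a, k2} \<le> card GE" using fGE card_mono by blast
      then have "card GE \<ge> 2" using ne by simp
      then have c2: "card GE = 2" "card HH = 0" using L ls by auto
      have GEe: "GE = {Suc a, k2}" using card_subset_eq[OF fGE sub] c2 ne by simp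
      have "HH = {}" using c2 fHH by simp
      then have "CX = {}" using CXH by auto
      have st: "1 \<le> bb p k2" "p ! (bb p k2) = L1" "\<forall>i. bb p k2 + 2 \<le> i \<and> i \<le> k2 \<longrightarrow> p ! (i - 1) = L0"
        using bb_struct[OF P kp(1) kp(2) kp(3)] by auto
      have b2: "bb p k2 = Suc (Suc a)"
      proof -
        have "\<not> bb p k2 \<le> a"
        proof
          assume "bb p k2 \<le> a"
          then have "bb p k2 + 2 \<le> Suc (Suc a) \<and> Suc (Suc a) \<le> k2" using k2(3) by simp
          then have "p ! (Suc (Suc a) - 1) = L0" using st(3) by blast
          then show False using ef by simp
        qed
        moreover have "bb p k2 \<noteq> Suc a" using kp(4) aa by auto
        ultimately show ?thesis using k2(2) by simp
      qed
      have posa: "pos p (bb p k2 - 2) = Some Le" using b2 aa unfolding pos_def by simp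
      have fb: "k2 - bb p k2 \<le> M - 2" using fan_boundE[OF P NF M3 kp(1) kp(2) kp(3) posa] .
      have "CD \<subseteq> {a}"
      proof (rule CDsub)
        show "GE \<subseteq> {Suc a} \<union> {k. p ! (bb p k - 1) \<noteq> Le}" using GEe b2 ef by auto
      qed
      then have "card CD \<le> 1" using card_mono[of "{a}" CD] by simp
      then have t1: "(M - 1) * card CD \<le> M - 1" using mult_le_mono2[of "card CD" 1 "M - 1"] by simp
      have "card DD \<le> (\<Sum>k\<in>GE. k - bb p k)" using D_bound[OF L] .
      also have "\<dots> = (Suc a - bb p (Suc a)) + (k2 - bb p k2)" using GEe ne by simp
      also have "\<dots> \<le> 1 + (M - 2)" using ef fb by simp
      finally have d1: "card DD \<le> 1 + (M - 2)" .
      have e1: "card {k \<in> {1..length p}. p ! (k - 1) = Le} = card CD" using cc \<open>CX = {}\<close> by simp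
      have "card DD + (M - 1) * card {k \<in> {1..length p}. p ! (k - 1) = Le} \<le> 1 + (M - 2) + (M - 1)"
        unfolding e1 using t1 d1 by linarith
      also have "\<dots> \<le> (M - 1) * 2" using M3 by simp
      also have "\<dots> = (M - 1) * sum (lam p X) (KX p X)" using ls c2 by simp
      finally show ?thesis .
    qed
  qed
qed

lemma card_KX_DD: "card (KX p X) + card DD = length p"
proof -
  define NK where "NK = {k \<in> {1..length p}. Suc k \<notin> X}"
  have "{1..length p} = KX p X \<union> NK" unfolding KX_def NK_def by auto
  moreover have "KX p X \<inter> NK = {}" unfolding KX_def NK_def by auto
  ultimately have "card (KX p X) + card NK = length p"
    by (metis card_Un_disjoint card_atLeastAtMost diff_Suc_1 finite_Un finite_atLeastAtMost)
  moreover have "DD = Suc ` NK"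
  proof
    show "DD \<subseteq> Suc ` NK"
    proof
      fix d assume "d \<in> DD"
      then have "d - 1 \<in> NK" "d = Suc (d - 1)" unfolding DD_def NK_def by auto
      then show "d \<in> Suc ` NK" by blast
    qed
  next
    show "Suc ` NK \<subseteq> DD"
    proof
      fix d assume "d \<in> Suc ` NK"
      then obtain k where "k \<in> NK" "d = Suc k" by blast
      moreover have "Suc k \<noteq> Suc (length p)" using \<open>k \<in> NK\<close> Xz unfolding NK_def by auto
      ultimately show "d \<in> DD" unfolding DD_def NK_def by auto
    qed
  qed
  then have "card DD = card NK" by (simp add: card_image)
  ultimately show ?thesis by simp
qed

lemma ell_le: "sum (lam p X) (KX p X) \<le> 2 * card (KX p X)"
  using sum_bounded_above[of "KX p X" "lam p X" 2] lam_le2 by (simp add: mult.commute)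

lemma key:
  assumes len: "length p + (M - 1) * card {k \<in> {1..length p}. p ! (k - 1) = Le} = 3 * M - 1"
  shows "3 * M - 1 \<le> card (KX p X) + (M - 1) * sum (lam p X) (KX p X)"
proof (cases "sum (lam p X) (KX p X) \<le> 2")
  case True
  have "card DD + (M - 1) * card {k \<in> {1..length p}. p ! (k - 1) = Le} \<le> (M - 1) * sum (lam p X) (KX p X)"
    using main_comb[OF True] .
  then show ?thesis using card_KX_DD len by linarith
next
  case False
  then have "card (KX p X) \<ge> 2" using ell_le by linarith
  moreover have "(M - 1) * 3 \<le> (M - 1) * sum (lam p X) (KX p X)" using False by simp
  ultimately show ?thesis using M3 by linarith
qed

end

lemma lam_le2g: "lam p X k \<le> 2" unfolding lam_def by auto

lemma ell_leg: "sum (lam p X) (KX p X) \<le> 2 * card (KX p X)"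
  using sum_bounded_above[of "KX p X" "lam p X" 2] lam_le2g by (simp add: mult.commute)

lemma count_card: "count_list xs x = card {k \<in> {1..length xs}. xs ! (k - 1) = x}"
proof -
  have "count_list xs x = length (filter ((=) x) xs)" by (induction xs) auto
  also have "\<dots> = card {i. i < length xs \<and> x = xs ! i}" by (rule length_filter_conv_card)
  also have "\<dots> = card (Suc ` {i. i < length xs \<and> x = xs ! i})" by (simp add: card_image)
  also have "Suc ` {i. i < length xs \<and> x = xs ! i} = {k \<in> {1..length xs}. xs ! (k - 1) = x}"
  proof
    show "Suc ` {i. i < length xs \<and> x = xs ! i} \<subseteq> {k \<in> {1..length xs}. xs ! (k - 1) = x}" by auto
  next
    show "{k \<in> {1..length xs}. xs ! (k - 1) = x} \<subseteq> Suc ` {i. i < length xs \<and> x = xs ! i}"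
    proof
      fix k assume "k \<in> {k \<in> {1..length xs}. xs ! (k - 1) = x}"
      then have "k - 1 \<in> {i. i < length xs \<and> x = xs ! i}" "k = Suc (k - 1)" by auto
      then show "k \<in> Suc ` {i. i < length xs \<and> x = xs ! i}" by blast
    qed
  qed
  finally show ?thesis .
qed

lemma ladder_sub: "p \<in> Pi_words \<Longrightarrow> 1 \<le> length p \<Longrightarrow> e \<in> ladder p \<Longrightarrow>
   \<exists>u k. e = {u, Suc k} \<and> u \<le> k \<and> 1 \<le> k \<and> k \<le> length p \<and> u \<in> Bk p k"
  using ladder_eq[of p] Bk_le by fastforce

theorem lemma4p9:
  fixes M y z :: nat and \<pi> :: "sym list"
  assumes "M \<ge> 3" and "\<pi> \<in> B_set M" and "outer_boundary_edge M \<pi> y z"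
  shows "balanced (ladder_vertices \<pi>) (bw_E \<pi> y z) (bw_I y z)"
proof -
  have M3: "M \<ge> 3" using assms(1) .
  have P: "\<pi> \<in> Pi_words" and NF: "nofan M \<pi>" using assms(2) unfolding B_set_def nofan_def by auto
  define n where "n = length \<pi>"
  define c where "c = card {k \<in> {1..n}. \<pi> ! (k - 1) = Le}"
  have cc: "count_list \<pi> Le = c" unfolding c_def n_def by (rule count_card)
  have c2: "c \<le> 2" using P cc unfolding Pi_words_def by auto
  have ob: "{y, z} \<in> ladder \<pi>" "0 < y" "y < z" "pos \<pi> y \<noteq> Some Le" "z = n + 1"
    "n = (if c = 0 then 3 * M - 1 else if c = 1 then 2 * M else M + 1)"
    using assms(3) cc unfolding outer_boundary_edge_def boundary_edge_def n_def by auto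
  have len: "n + (M - 1) * c = 3 * M - 1"
  proof -
    consider "c = 0" | "c = 1" | "c = 2" using c2 by linarith
    then show ?thesis
    proof cases
      case 1 then show ?thesis using ob(6) by simp
    next
      case 2 then show ?thesis using ob(6) M3 by simp
    next
      case 3 then show ?thesis using ob(6) M3 by simp
    qed
  qed
  have nM: "M + 1 \<le> n" using ob(6) M3 by (auto split: if_splits)
  have n2: "2 \<le> length \<pi>" using nM M3 n_def by simp
  have n1: "1 \<le> length \<pi>" using n2 by simp
  have zn: "z = Suc n" using ob(5) by simp
  have yn: "y \<le> n" using ob(3) zn by simp
  have yE: "\<pi> ! (y - 1) \<noteq> Le" using ob(4) ob(2) yn unfolding pos_def n_def by auto
  have yB: "y \<in> Bk \<pi> n"
  proof -
    obtain u k where uk: "{y, z} = {u, Suc k}" "u \<le> k" "1 \<le> k" "k \<le> length \<pi>" "u \<in> Bk \<pi> k"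
      using ladder_sub[OF P n1 ob(1)] by blast
    have "z \<noteq> u" using uk zn n_def by simp
    then have "y = u" "z = Suc k" using uk(1) by (auto simp: doubleton_eq_iff)
    then show ?thesis using uk zn by simp
  qed
  have KEY: "3 * M - 1 \<le> card (KX \<pi> X) + (M - 1) * sum (lam \<pi> X) (KX \<pi> X)"
    if "X \<subseteq> {0..Suc n}" "0 \<in> X" "1 \<in> X" "Suc n \<in> X" "y \<in> X" for X
    using key[of \<pi> M X y] P NF M3 n2 that yB ob(2) yE len unfolding n_def c_def by blast
  have CE: "card (Ein \<pi> X) + sum (lam \<pi> X) (KX \<pi> X) = 2 * card (KX \<pi> X)" for X
    using count_edges[OF P n1] .
  define I where "I = bw_I y z"
  define V where "V = ladder_vertices \<pi>"
  define Es where "Es = bw_E \<pi> y z"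
  have Ie: "I = {0, 1, y, Suc n}" unfolding I_def bw_I_def zn by simp
  have Ve: "V = {0..Suc n}" unfolding V_def ladder_vertices_def n_def by simp
  have IV: "I \<subseteq> V" using Ie Ve yn by auto
  have finL: "finite (ladder \<pi>)" using ladder_eq[OF P n1] by (simp add: Bk_def)
  have LV: "e \<in> ladder \<pi> \<Longrightarrow> e \<subseteq> V" for e
    using ladder_sub[OF P n1] Ve n_def by fastforce
  have y1: "y \<noteq> 1"
  proof
    assume y1: "y = 1"
    have "KX \<pi> I = {n}" unfolding KX_def Ie y1 n_def using n1 by auto
    then have "card (KX \<pi> I) = 1" by simp
    moreover have "3 * M - 1 \<le> card (KX \<pi> I) + (M - 1) * sum (lam \<pi> I) (KX \<pi> I)"
      using KEY[of I] IV Ve Ie by auto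
    moreover have "sum (lam \<pi> I) (KX \<pi> I) \<le> 2" using ell_leg[of \<pi> I] \<open>card (KX \<pi> I) = 1\<close> by simp
    then have "(M - 1) * sum (lam \<pi> I) (KX \<pi> I) \<le> (M - 1) * 2" by (rule mult_le_mono2)
    ultimately have "3 * M - 1 \<le> 1 + (M - 1) * 2" by linarith
    then show False using M3 by simp
  qed
  then have y2: "2 \<le> y" using ob(2) by simp
  have KI: "KX \<pi> I = {y - 1, n}" unfolding KX_def Ie n_def using y2 yn n_def by auto
  have cKI: "card (KX \<pi> I) = 2" using KI y2 yn by simp
  have lI: "sum (lam \<pi> I) (KX \<pi> I) \<ge> 3"
  proof (rule ccontr)
    assume "\<not> 3 \<le> sum (lam \<pi> I) (KX \<pi> I)"
    then have "sum (lam \<pi> I) (KX \<pi> I) \<le> 2" by simp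
    moreover have "3 * M - 1 \<le> card (KX \<pi> I) + (M - 1) * sum (lam \<pi> I) (KX \<pi> I)"
      using KEY[of I] IV Ve Ie by auto
    moreover have "(M - 1) * sum (lam \<pi> I) (KX \<pi> I) \<le> (M - 1) * 2"
      using \<open>sum (lam \<pi> I) (KX \<pi> I) \<le> 2\<close> by (rule mult_le_mono2)
    ultimately have "3 * M - 1 \<le> 2 + (M - 1) * 2" using cKI by linarith
    then show False using M3 by simp
  qed
  have EI1: "card (Ein \<pi> I) \<le> 1" using CE[of I] cKI lI by simp
  have yzI: "{y, z} \<in> Ein \<pi> I" unfolding Ein_def using ob(1) Ie zn by auto
  have EIe: "Ein \<pi> I = {{y, z}}"
  proof -
    have "finite (Ein \<pi> I)" using finL unfolding Ein_def by simp
    moreover have "card (Ein \<pi> I) \<noteq> 0" using yzI \<open>finite (Ein \<pi> I)\<close> by auto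
    ultimately have "card (Ein \<pi> I) = 1" using EI1 by linarith
    then obtain x where "Ein \<pi> I = {x}" by (rule card_1_singletonE)
    then show ?thesis using yzI by simp
  qed
  have EsE: "Es = ladder \<pi> - Ein \<pi> I" unfolding Es_def bw_E_def Ein_def I_def by auto
  have cEs: "card Es = card (ladder \<pi>) - 1"
    using EsE EIe finL ob(1) by simp
  have KV: "KX \<pi> V = {1..n}" unfolding KX_def Ve n_def by auto
  have lamV: "lam \<pi> V k = (if \<pi> ! (k - 1) \<noteq> Le then 0 else 1)" if "k \<in> {1..n}" for k
  proof -
    have "k \<in> V" "bb \<pi> k \<in> V" using that Ve bb_less[of k \<pi>] by auto
    then show ?thesis unfolding lam_def by simp
  qed
  have lV: "sum (lam \<pi> V) (KX \<pi> V) = c"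
  proof -
    have "sum (lam \<pi> V) (KX \<pi> V) = (\<Sum>k\<in>{1..n}. if \<pi> ! (k - 1) \<noteq> Le then 0 else 1)"
      unfolding KV using lamV by (intro sum.cong) auto
    also have "\<dots> = c" unfolding c_def using sum_ind[of "{1..n}" "\<lambda>k. \<pi> ! (k - 1) \<noteq> Le"] by simp
    finally show ?thesis .
  qed
  have EVL: "Ein \<pi> V = ladder \<pi>" unfolding Ein_def using LV by auto
  have cL: "card (ladder \<pi>) + c = 2 * n" using CE[of V] EVL lV KV by simp
  have cEs2: "card Es + c + 1 = 2 * n" using cEs cL yzI unfolding Ein_def
    by (metis Suc_eq_plus1 add.commute add_Suc_right card_0_eq diff_Suc_1 empty_iff finL mem_Collect_eq not0_implies_Suc)
  have cV: "card V = n + 2" using Ve by simp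
  have cI: "card I = 4" using Ie y2 yn by auto
  have dB: "density V Es I = (2 * real M - 1) / (real M - 1)"
  proof -
    have e1: "real (card Es) = 2 * real n - real c - 1" using cEs2 by (simp add: algebra_simps)
    have "real (n + (M - 1) * c) = real (3 * M - 1)" using len by simp
    then have e2: "real n + (real M - 1) * real c = 3 * real M - 1" using M3 by (simp add: of_nat_diff)
    have p1: "real n - 2 > 0" using nM M3 by simp
    have p2: "real M - 1 > 0" using M3 by simp
    have id: "(2 * real n - real c - 1) * (real M - 1) - (2 * real M - 1) * (real n - 2)
        = - (real n + (real M - 1) * real c - (3 * real M - 1))" by (simp add: algebra_simps)
    have "density V Es I = (2 * real n - real c - 1) / (real n - 2)"
      unfolding density_def cV cI e1 by simp
    also have "\<dots> = (2 * real M - 1) / (real M - 1)"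
      using id e2 p1 p2 by (simp add: field_simps)
    finally show ?thesis .
  qed
  have dBpos: "density V Es I \<ge> 0" using dB M3 by simp
  show ?thesis
    unfolding balanced_def I_def[symmetric] V_def[symmetric] Es_def[symmetric]
  proof (intro conjI allI impI)
    show "ext_graph V Es I"
      unfolding ext_graph_def
    proof (intro conjI ballI)
      show "finite V" using Ve by simp
      show "I \<subseteq> V" using IV .
    next
      fix e assume "e \<in> Es"
      then have "e \<in> ladder \<pi>" "\<not> e \<subseteq> I" unfolding Es_def bw_E_def I_def by auto
      then show "\<not> e \<subseteq> I" by simp
      obtain u k where uk: "e = {u, Suc k}" "u \<le> k" "1 \<le> k" "k \<le> length \<pi>"
        using ladder_sub[OF P n1 \<open>e \<in> ladder \<pi>\<close>] by blast
      show "\<exists>u v. e = {u, v} \<and> u \<noteq> v \<and> u \<in> V \<and> v \<in> V"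
        using uk Ve n_def by (intro exI[where x=u] exI[where x="Suc k"]) auto
    qed
  next
    fix VK EK assume sub: "subext VK EK I V Es I"
    then have eg: "ext_graph VK EK I" and VKV: "VK \<subseteq> V" and EKE: "EK \<subseteq> Es" unfolding subext_def by auto
    have fVK: "finite VK" and IVK: "I \<subseteq> VK"
      and EKin: "\<And>e. e \<in> EK \<Longrightarrow> \<exists>u v. e = {u, v} \<and> u \<noteq> v \<and> u \<in> VK \<and> v \<in> VK"
      using eg unfolding ext_graph_def by auto
    define s where "s = card (KX \<pi> VK)"
    define l where "l = sum (lam \<pi> VK) (KX \<pi> VK)"
    define e where "e = card (Ein \<pi> VK)"
    have K1: "3 * M - 1 \<le> s + (M - 1) * l" unfolding s_def l_def
      using KEY[of VK] VKV Ve IVK Ie by auto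
    have K2: "e + l = 2 * s" unfolding e_def l_def s_def using CE .
    have yzVK: "{y, z} \<in> Ein \<pi> VK" using yzI IVK unfolding Ein_def by auto
    have fE: "finite (Ein \<pi> VK)" using finL unfolding Ein_def by simp
    have EKsub: "EK \<subseteq> Ein \<pi> VK - {{y, z}}"
    proof
      fix x assume x: "x \<in> EK"
      then have "x \<in> ladder \<pi>" "\<not> x \<subseteq> I" using EKE unfolding Es_def bw_E_def I_def by auto
      moreover have "x \<subseteq> VK" using EKin[OF x] by auto
      moreover have "x \<noteq> {y, z}" using \<open>\<not> x \<subseteq> I\<close> Ie zn by auto
      ultimately show "x \<in> Ein \<pi> VK - {{y, z}}" unfolding Ein_def by auto
    qed
    have K3: "card EK + 1 \<le> e"
    proof -
      have a: "card EK \<le> card (Ein \<pi> VK - {{y, z}})" using EKsub fE by (simp add: card_mono)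
      have b: "card (Ein \<pi> VK - {{y, z}}) = e - 1" unfolding e_def using yzVK fE by simp
      have "Ein \<pi> VK \<noteq> {}" using yzVK by blast
      then have "e \<ge> 1" unfolding e_def using fE by (simp add: Suc_le_eq card_gt_0_iff)
      then show ?thesis using a b by linarith
    qed
    have VKe: "VK = insert 0 (insert 1 (Suc ` KX \<pi> VK))"
    proof
      show "VK \<subseteq> insert 0 (insert 1 (Suc ` KX \<pi> VK))"
      proof
        fix v assume v: "v \<in> VK"
        show "v \<in> insert 0 (insert 1 (Suc ` KX \<pi> VK))"
        proof (cases "v \<le> 1")
          case True then show ?thesis by auto
        next
          case False
          then have "v - 1 \<in> KX \<pi> VK" "v = Suc (v - 1)" using v VKV Ve unfolding KX_def n_def by auto
          then show ?thesis by blast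
        qed
      qed
    next
      show "insert 0 (insert 1 (Suc ` KX \<pi> VK)) \<subseteq> VK" using IVK Ie unfolding KX_def by auto
    qed
    have cVK: "card VK = s + 2"
    proof -
      have "0 \<notin> insert 1 (Suc ` KX \<pi> VK)" "1 \<notin> Suc ` KX \<pi> VK" unfolding KX_def by auto
      moreover have "finite (KX \<pi> VK)" unfolding KX_def by simp
      ultimately have "card (insert 0 (insert 1 (Suc ` KX \<pi> VK))) = s + 2"
        unfolding s_def by (simp add: card_image)
      then show ?thesis using VKe by simp
    qed
    have s2: "s \<ge> 2"
    proof -
      have "{y - 1, n} \<subseteq> KX \<pi> VK" unfolding KX_def using IVK Ie y2 yn n_def by auto
      then have "card {y - 1, n} \<le> s" unfolding s_def by (simp add: card_mono KX_def)
      then show ?thesis using y2 yn by simp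
    qed
    show "density VK EK I \<le> density V Es I"
    proof (cases "s = 2")
      case True
      then have "density VK EK I = 0" unfolding density_def cVK cI by simp
      then show ?thesis using dBpos by simp
    next
      case False
      then have s3: "real s \<ge> 3" using s2 by simp
      have rK1: "3 * real M - 1 \<le> real s + (real M - 1) * real l"
      proof -
        have "real (3 * M - 1) \<le> real (s + (M - 1) * l)" using K1 by linarith
        then show ?thesis using M3 by (simp add: of_nat_diff)
      qed
      have rK2: "real e + real l = 2 * real s" using K2 by (metis of_nat_add of_nat_mult of_nat_numeral)
      have rK3: "real (card EK) + 1 \<le> real e" using K3 by linarith
      have p1: "real s - 2 > 0" using s3 by simp
      have p2: "real M - 1 > 0" using M3 by simp
      have id: "(2 * real M - 1) * (real s - 2) - (2 * real s - real l - 1) * (real M - 1)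
          = real s + (real M - 1) * real l - (3 * real M - 1)" by (simp add: algebra_simps)
      have "real (card EK) * (real M - 1) \<le> (real e - 1) * (real M - 1)"
        using rK3 p2 by (intro mult_right_mono) auto
      also have "\<dots> = (2 * real s - real l - 1) * (real M - 1)"
      proof -
        have ee: "real e = 2 * real s - real l" using rK2 by linarith
        show ?thesis unfolding ee by simp
      qed
      also have "\<dots> \<le> (2 * real M - 1) * (real s - 2)" using id rK1 by linarith
      finally have ineq: "real (card EK) * (real M - 1) \<le> (2 * real M - 1) * (real s - 2)" .
      have "density VK EK I = real (card EK) / (real s - 2)" unfolding density_def cVK cI by simp
      also have "\<dots> \<le> (2 * real M - 1) / (real M - 1)"
        using ineq p1 p2 by (simp add: field_simps)
      finally show ?thesis using dB by simp
    qed
  qed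
qed

end
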